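(* For every function $g:(0,\tfrac12)\to\mathbb N$ there is a (possibly infinite) family of graphs $\mathcal F$ with $C_4\in\mathcal F$ and a sequence $(\varepsilon_k)_{k\ge1}$ of positive reals with $\varepsilon_k\to0$, such that for every $k\ge1$ there is $n_0(k)$ so that for every $n\ge n_0(k)$ there is an $n$-vertex graph $G$ which is $\varepsilon_k$-far from being induced $\mathcal F$-free, and yet every induced subgraph of $G$ on $g(\varepsilon_k)$ vertices is induced $\mathcal F$-free.
   Context: A graph is induced $\mathcal F$-free if it contains no induced subgraph isomorphic to any $F\in\mathcal F$. An $n$-vertex graph $G$ is $\varepsilon$-far from satisfying a property $\mathcal P$ if one must add and/or delete at least $\varepsilon n^2$ edges of $G$ in order to obtain a graph satisfying $\mathcal P$. *)

theory Defs
  imports Complex_Main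
begin

text \<open>A finite simple graph: a vertex set and a set of edges, each edge a
2-element subset of the vertex set.\<close>
type_synonym graph = "nat set \<times> nat set set"

definition verts :: "graph \<Rightarrow> nat set" where "verts G = fst G"
definition edges :: "graph \<Rightarrow> nat set set" where "edges G = snd G"

definition wf_graph :: "graph \<Rightarrow> bool" where
  "wf_graph G \<longleftrightarrow> finite (verts G) \<and>
     (\<forall>e\<in>edges G. e \<subseteq> verts G \<and> card e = 2)"

definition induced_sub :: "graph \<Rightarrow> nat set \<Rightarrow> graph" where
  "induced_sub G S = (S, {e\<in>edges G. e \<subseteq> S})"

definition graph_iso :: "graph \<Rightarrow> graph \<Rightarrow> bool" where
  "graph_iso H G \<longleftrightarrow> (\<exists>f. bij_betw f (verts H) (verts G) \<and>
     (\<forall>x\<in>verts H. \<forall>y\<in>verts H. {x, y} \<in> edges H \<longleftrightarrow> {f x, f y} \<in> edges G))"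

definition contains_induced :: "graph \<Rightarrow> graph \<Rightarrow> bool" where
  "contains_induced G H \<longleftrightarrow> (\<exists>S\<subseteq>verts G. graph_iso H (induced_sub G S))"

definition induced_free :: "graph set \<Rightarrow> graph \<Rightarrow> bool" where
  "induced_free \<F> G \<longleftrightarrow> (\<forall>H\<in>\<F>. \<not> contains_induced G H)"

definition far_from_free :: "real \<Rightarrow> graph set \<Rightarrow> graph \<Rightarrow> bool" where
  "far_from_free \<epsilon> \<F> G \<longleftrightarrow>
     (\<forall>E'. wf_graph (verts G, E') \<and> induced_free \<F> (verts G, E') \<longrightarrow>
        real (card (edges G - E' \<union> (E' - edges G))) \<ge> \<epsilon> * real (card (verts G))^2)"

definition C4 :: graph where
  "C4 = ({0,1,2,3}, {{0,1},{1,2},{2,3},{3,0}})"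

end

theory Submission
  imports Defs "HOL-Library.FuncSet"
begin


lemma verts_pair[simp]: "verts (V, E) = V" by (simp add: verts_def)
lemma edges_pair[simp]: "edges (V, E) = E" by (simp add: edges_def)
lemma verts_ind[simp]: "verts (induced_sub G S) = S" by (simp add: induced_sub_def)
lemma edges_ind[simp]: "edges (induced_sub G S) = {e\<in>edges G. e \<subseteq> S}" by (simp add: induced_sub_def)

lemma iso_refl: "graph_iso H H"
  unfolding graph_iso_def by (rule exI[of _ id]) auto

lemma ci_trans:
  assumes "contains_induced G H" "contains_induced H K"
  shows "contains_induced G K"
proof -
  obtain S f where S: "S \<subseteq> verts G" and bf: "bij_betw f (verts H) S"
    and ef: "\<forall>x\<in>verts H. \<forall>y\<in>verts H. {x,y} \<in> edges H \<longleftrightarrow> {f x, f y} \<in> edges (induced_sub G S)"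
    using assms(1) unfolding contains_induced_def graph_iso_def by auto
  obtain T h where T: "T \<subseteq> verts H" and bh: "bij_betw h (verts K) T"
    and eh: "\<forall>x\<in>verts K. \<forall>y\<in>verts K. {x,y} \<in> edges K \<longleftrightarrow> {h x, h y} \<in> edges (induced_sub H T)"
    using assms(2) unfolding contains_induced_def graph_iso_def by auto
  have b2: "bij_betw f T (f ` T)" using bf T by (meson bij_betw_subset)
  have bc: "bij_betw (f \<circ> h) (verts K) (f ` T)" using bh b2 by (rule bij_betw_trans)
  have hT: "x \<in> verts K \<Longrightarrow> h x \<in> T" for x using bh by (auto simp: bij_betw_def)
  have fS: "x \<in> verts H \<Longrightarrow> f x \<in> S" for x using bf by (auto simp: bij_betw_def)
  have "\<forall>x\<in>verts K. \<forall>y\<in>verts K. {x,y} \<in> edges K \<longleftrightarrow> {(f\<circ>h) x, (f\<circ>h) y} \<in> edges (induced_sub G (f ` T))"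
  proof (intro ballI)
    fix x y assume x: "x \<in> verts K" and y: "y \<in> verts K"
    have "{x,y} \<in> edges K \<longleftrightarrow> {h x, h y} \<in> edges H" using eh x y hT by auto
    also have "\<dots> \<longleftrightarrow> {f (h x), f (h y)} \<in> edges G" using ef x y hT T fS by auto
    also have "\<dots> \<longleftrightarrow> {(f\<circ>h) x, (f\<circ>h) y} \<in> edges (induced_sub G (f ` T))" using x y hT by auto
    finally show "{x,y} \<in> edges K \<longleftrightarrow> {(f\<circ>h) x, (f\<circ>h) y} \<in> edges (induced_sub G (f ` T))" .
  qed
  moreover have "f ` T \<subseteq> verts G" using T fS S by auto
  ultimately have "graph_iso K (induced_sub G (f ` T))" "f ` T \<subseteq> verts G"
    unfolding graph_iso_def using bc by auto
  then show ?thesis unfolding contains_induced_def by blast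
qed

lemma ci_sub: "S \<subseteq> verts G \<Longrightarrow> contains_induced (induced_sub G S) H \<Longrightarrow> contains_induced G H"
proof -
  assume a: "S \<subseteq> verts G" "contains_induced (induced_sub G S) H"
  have "contains_induced G (induced_sub G S)" unfolding contains_induced_def using a(1) iso_refl by blast
  then show ?thesis using a(2) by (rule ci_trans)
qed

lemma ci_card: "contains_induced G H \<Longrightarrow> finite (verts G) \<Longrightarrow> card (verts H) \<le> card (verts G)"
proof -
  assume a: "contains_induced G H" "finite (verts G)"
  then obtain S f where "S \<subseteq> verts G" "bij_betw f (verts H) S"
    unfolding contains_induced_def graph_iso_def by auto
  then show ?thesis using a(2) by (metis bij_betw_same_card card_mono)
qed


definition nxt :: "nat \<Rightarrow> nat \<Rightarrow> nat" where "nxt L i = (if Suc i = L then 0 else Suc i)"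
definition prv :: "nat \<Rightarrow> nat \<Rightarrow> nat" where "prv L i = (if i = 0 then L - 1 else i - 1)"
definition cadj :: "nat \<Rightarrow> nat \<Rightarrow> nat \<Rightarrow> bool" where "cadj L x y \<longleftrightarrow> y = nxt L x \<or> x = nxt L y"
definition cyc :: "nat \<Rightarrow> graph" where "cyc L = ({..<L}, {{i, nxt L i} | i. i < L})"
definition badj :: "nat \<Rightarrow> nat \<Rightarrow> nat \<Rightarrow> bool" where
  "badj L u v \<longleftrightarrow> u mod L = v mod L \<or> cadj L (u mod L) (v mod L)"
definition bl :: "nat \<Rightarrow> nat \<Rightarrow> graph" where
  "bl n L = ({..<n}, {{u,v} | u v. u < n \<and> v < n \<and> u \<noteq> v \<and> badj L u v})"

lemma C4_cyc: "C4 = cyc 4"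
proof -
  have "{{i, nxt 4 i} | i. i < (4::nat)} = {{0,1},{1,2},{2,3},{3,0}}"
  proof (rule set_eqI, rule iffI)
    fix e assume "e \<in> {{i, nxt 4 i} | i. i < (4::nat)}"
    then obtain i where "i < (4::nat)" "e = {i, nxt 4 i}" by auto
    then show "e \<in> {{0,1},{1,2},{2,3},{3,0}}"
      by (auto simp: nxt_def less_Suc_eq numeral_eq_Suc)
  next
    fix e assume "e \<in> {{0::nat,1},{1,2},{2,3},{3,0}}"
    then show "e \<in> {{i, nxt 4 i} | i. i < (4::nat)}"
      apply (simp add: nxt_def)
      apply (elim disjE)
      apply (rule exI[of _ 0]; simp)
      apply (rule exI[of _ 1]; simp add: numeral_eq_Suc)
      apply (rule exI[of _ 2]; simp add: numeral_eq_Suc)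
      apply (rule exI[of _ 3]; simp add: numeral_eq_Suc)
      done
  qed
  moreover have "{..<(4::nat)} = {0,1,2,3}" by auto
  ultimately show ?thesis unfolding C4_def cyc_def by simp
qed

lemma nxt_lt: "i < L \<Longrightarrow> nxt L i < L" by (auto simp: nxt_def)
lemma prv_lt: "i < L \<Longrightarrow> prv L i < L" by (auto simp: prv_def)
lemma nxt_neq: "L \<ge> 2 \<Longrightarrow> i < L \<Longrightarrow> nxt L i \<noteq> i" by (auto simp: nxt_def)
lemma cadj_irr: "L \<ge> 2 \<Longrightarrow> x < L \<Longrightarrow> \<not> cadj L x x" by (auto simp: cadj_def nxt_def)

lemma cyc_edge: "x < L \<Longrightarrow> y < L \<Longrightarrow> {x,y} \<in> edges (cyc L) \<longleftrightarrow> cadj L x y"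
  unfolding cyc_def cadj_def by (auto simp: doubleton_eq_iff)

lemma wf_cyc: "L \<ge> 2 \<Longrightarrow> wf_graph (cyc L)"
  unfolding wf_graph_def cyc_def using nxt_lt nxt_neq by fastforce

lemma badj_sym: "badj L u v = badj L v u" unfolding badj_def cadj_def by auto

lemma bl_edge: "{u,v} \<in> edges (bl n L) \<longleftrightarrow> u < n \<and> v < n \<and> u \<noteq> v \<and> badj L u v"
  unfolding bl_def using badj_sym by (auto simp: doubleton_eq_iff)

lemma wf_bl: "wf_graph (bl n L)"
  unfolding wf_graph_def bl_def by auto


lemma nxt_mod: "L > 0 \<Longrightarrow> nxt L (c mod L) = Suc c mod L"
  unfolding nxt_def by (simp add: mod_Suc)

lemma closed_all:
  assumes Q: "Q \<subseteq> {..<L}" and a: "a \<in> Q" and cl: "\<forall>b\<in>Q. nxt L b \<in> Q"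
  shows "Q = {..<L}"
proof -
  have L0: "L > 0" using Q a by auto
  have aL: "a < L" using Q a by auto
  have k: "(a + k) mod L \<in> Q" for k
  proof (induction k)
    case 0 then show ?case using a aL by simp
  next
    case (Suc k)
    then have "nxt L ((a + k) mod L) \<in> Q" using cl by blast
    then show ?case using nxt_mod[OF L0, of "a+k"] by simp
  qed
  have "i \<in> Q" if "i < L" for i
  proof -
    have "(a + (L - a + i)) mod L = i" using aL that by simp
    then show ?thesis using k[of "L - a + i"] by simp
  qed
  then show ?thesis using Q by auto
qed

lemma nxt_prv: "x < L \<Longrightarrow> nxt L (prv L x) = x" by (auto simp: nxt_def prv_def)
lemma cadj_cases: "a < L \<Longrightarrow> b < L \<Longrightarrow> cadj L a b \<Longrightarrow> b = nxt L a \<or> b = prv L a"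
  unfolding cadj_def nxt_def prv_def by (auto split: if_splits)

lemma prv_nxt2: "x < L \<Longrightarrow> L \<ge> 4 \<Longrightarrow> prv L x \<noteq> nxt L (nxt L x)"
  unfolding prv_def nxt_def by (cases "x = 0"; cases "Suc x = L"; cases "Suc (Suc x) = L"; simp)

lemma cyc_in_bl:
  assumes ci: "contains_induced (bl n L) (cyc L')" and L: "L \<ge> 3" and L': "L' \<ge> 4"
  shows "L' = L"
proof -
  obtain S f where S: "S \<subseteq> {..<n}" and bf: "bij_betw f {..<L'} S"
    and ef: "\<forall>x\<in>{..<L'}. \<forall>y\<in>{..<L'}. {x,y} \<in> edges (cyc L') \<longleftrightarrow> {f x, f y} \<in> edges (induced_sub (bl n L) S)"
    using ci unfolding contains_induced_def graph_iso_def by (auto simp: cyc_def bl_def)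
  have fS: "x < L' \<Longrightarrow> f x \<in> S" for x using bf by (auto simp: bij_betw_def)
  have finj: "x < L' \<Longrightarrow> y < L' \<Longrightarrow> x \<noteq> y \<Longrightarrow> f x \<noteq> f y" for x y
    using bf by (auto simp: bij_betw_def inj_on_def)
  have key: "cadj L' x y \<longleftrightarrow> badj L (f x) (f y)" if "x < L'" "y < L'" "x \<noteq> y" for x y
  proof -
    have "cadj L' x y \<longleftrightarrow> {x,y} \<in> edges (cyc L')" using cyc_edge that by simp
    also have "\<dots> \<longleftrightarrow> {f x, f y} \<in> edges (induced_sub (bl n L) S)" using ef that by simp
    also have "\<dots> \<longleftrightarrow> {f x, f y} \<in> edges (bl n L)" using fS that by simp
    also have "\<dots> \<longleftrightarrow> f x < n \<and> f y < n \<and> f x \<noteq> f y \<and> badj L (f x) (f y)" by (rule bl_edge)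
    also have "\<dots> \<longleftrightarrow> badj L (f x) (f y)" using fS S that finj by auto
    finally show ?thesis .
  qed
  define p where "p x = f x mod L" for x
  have bp: "badj L (f x) (f y) \<longleftrightarrow> p x = p y \<or> cadj L (p x) (p y)" for x y
    unfolding p_def badj_def by simp
  have pL: "p x < L" for x using L unfolding p_def by simp
  have sl: False if "x < L'" "y < L'" "x \<noteq> y" "p x = p y" "y = nxt L' x" for x y
  proof -
    define z where "z = prv L' x"
    have zL: "z < L'" using that prv_lt z_def by simp
    have xz: "x = nxt L' z" using nxt_prv that z_def by simp
    have zx: "z \<noteq> x" using that L' z_def by (auto simp: prv_def)
    have zy: "z \<noteq> y" using that L' z_def by (auto simp: prv_def nxt_def)
    have "cadj L' z x" using xz cadj_def by simp
    then have "badj L (f z) (f x)" using key zL that zx by blast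
    then have "badj L (f z) (f y)" using bp that by metis
    then have "cadj L' z y" using key zL that zy by blast
    then have "y = nxt L' z \<or> z = nxt L' y" by (simp add: cadj_def)
    then show False
    proof
      assume "y = nxt L' z" then show False using xz that by simp
    next
      assume "z = nxt L' y"
      then have "prv L' x = nxt L' (nxt L' x)" using z_def that by simp
      then show False using prv_nxt2[OF that(1) L'] by simp
    qed
  qed
  have inj: "inj_on p {..<L'}"
  proof (rule inj_onI)
    fix x y assume x: "x \<in> {..<L'}" and y: "y \<in> {..<L'}" and pe: "p x = p y"
    show "x = y"
    proof (rule ccontr)
      assume ne: "x \<noteq> y"
      have "badj L (f x) (f y)" using bp pe by simp
      then have "cadj L' x y" using key x y ne by simp
      then show False unfolding cadj_def using sl x y ne pe by (metis lessThan_iff)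
    qed
  qed
  have clo: "nxt L (p x) \<in> p ` {..<L'}" if x: "x < L'" for x
  proof -
    define y1 where "y1 = nxt L' x"
    define y2 where "y2 = prv L' x"
    have y1L: "y1 < L'" "y2 < L'" using x nxt_lt prv_lt y1_def y2_def by auto
    have ne: "y1 \<noteq> x" "y2 \<noteq> x" "y1 \<noteq> y2" using x L' y1_def y2_def by (auto simp: nxt_def prv_def)
    have "cadj L' x y1" "cadj L' x y2" using y1_def y2_def nxt_prv x by (auto simp: cadj_def)
    then have b: "badj L (f x) (f y1)" "badj L (f x) (f y2)" using key x y1L ne by auto
    have pn: "p x \<noteq> p y1" "p x \<noteq> p y2" "p y1 \<noteq> p y2"
      using inj x y1L ne by (auto simp: inj_on_def)
    have "cadj L (p x) (p y1)" "cadj L (p x) (p y2)" using b bp pn by auto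
    then have "p y1 = nxt L (p x) \<or> p y1 = prv L (p x)" "p y2 = nxt L (p x) \<or> p y2 = prv L (p x)"
      using cadj_cases pL by auto
    then have "p y1 = nxt L (p x) \<or> p y2 = nxt L (p x)" using pn by auto
    then show ?thesis using y1L by (metis image_eqI lessThan_iff)
  qed
  have "p ` {..<L'} = {..<L}"
    by (rule closed_all[of _ _ "p 0"]) (use pL L' clo in auto)
  then have "card {..<L'} = card {..<L}" using card_image[OF inj] by simp
  then show ?thesis by simp
qed



lemma decode: "(i::nat) < L \<Longrightarrow> i' < L \<Longrightarrow> i + L * x = i' + L * y \<Longrightarrow> i = i' \<and> x = y"
proof -
  assume a: "i < L" "i' < L" "i + L * x = i' + L * y"
  have "(i + L * x) mod L = i" "(i' + L * y) mod L = i'" using a(1,2) by simp_all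
  then have ii: "i = i'" using a(3) by metis
  have "L > 0" using a by simp
  then show ?thesis using a(3) ii by simp
qed

lemma transversal:
  fixes D :: "nat set set"
  assumes fin: "finite D" and cD: "card D < s^2" and L: "L \<ge> 2"
  shows "\<exists>a \<in> PiE {..<L} (\<lambda>_. {..<s}). \<forall>i<L. \<forall>j<L. i \<noteq> j \<longrightarrow> {i + L * a i, j + L * a j} \<notin> D"
proof -
  define T where "T = PiE {..<L} (\<lambda>_. {..<s::nat})"
  have finT: "finite T" unfolding T_def by (simp add: finite_PiE)
  have cT: "card T = s^L" unfolding T_def by (simp add: card_PiE)
  define K where "K d = {a\<in>T. \<exists>i<L. \<exists>j<L. i \<noteq> j \<and> {i + L * a i, j + L * a j} = d}" for d
  have Kc: "card (K d) \<le> s^(L-2)" for d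
  proof (cases "K d = {}")
    case True then show ?thesis by simp
  next
    case False
    then obtain a0 i0 j0 where a0: "a0 \<in> T" and ij0: "i0 < L" "j0 < L" "i0 \<noteq> j0"
      and d: "{i0 + L * a0 i0, j0 + L * a0 j0} = d" unfolding K_def by blast
    define R where "R = {a\<in>T. a i0 = a0 i0 \<and> a j0 = a0 j0}"
    have KR: "K d \<subseteq> R"
    proof
      fix a assume "a \<in> K d"
      then obtain i j where a: "a \<in> T" and ij: "i < L" "j < L" "i \<noteq> j"
        and e: "{i + L * a i, j + L * a j} = {i0 + L * a0 i0, j0 + L * a0 j0}"
        unfolding K_def using d by blast
      from e have "(i + L * a i = i0 + L * a0 i0 \<and> j + L * a j = j0 + L * a0 j0) \<or>
                   (i + L * a i = j0 + L * a0 j0 \<and> j + L * a j = i0 + L * a0 i0)"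
        by (auto simp: doubleton_eq_iff)
      then show "a \<in> R"
      proof
        assume h: "i + L * a i = i0 + L * a0 i0 \<and> j + L * a j = j0 + L * a0 j0"
        then have "i = i0 \<and> a i = a0 i0" "j = j0 \<and> a j = a0 j0"
          using decode ij ij0 by blast+
        then show ?thesis using a unfolding R_def by auto
      next
        assume h: "i + L * a i = j0 + L * a0 j0 \<and> j + L * a j = i0 + L * a0 i0"
        then have "i = j0 \<and> a i = a0 j0" "j = i0 \<and> a j = a0 i0"
          using decode ij ij0 by blast+
        then show ?thesis using a unfolding R_def by auto
      qed
    qed
    define J where "J = {..<L} - {i0, j0}"
    have cJ: "card J = L - 2" unfolding J_def using ij0 by (simp add: card_Diff_subset)
    have inj: "inj_on (\<lambda>a. restrict a J) R"
    proof (rule inj_onI)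
      fix a b assume a: "a \<in> R" and b: "b \<in> R" and e: "restrict a J = restrict b J"
      show "a = b"
      proof
        fix i
        show "a i = b i"
        proof (cases "i < L")
          case True
          then show ?thesis
          proof (cases "i \<in> J")
            case True then show ?thesis using e by (metis restrict_apply')
          next
            case False then have "i = i0 \<or> i = j0" using \<open>i < L\<close> J_def by auto
            then show ?thesis using a b unfolding R_def by auto
          qed
        next
          case False
          then have "a i = undefined" "b i = undefined" using a b unfolding R_def T_def
            by (auto simp: PiE_def extensional_def)
          then show ?thesis by simp
        qed
      qed
    qed
    have img: "(\<lambda>a. restrict a J) ` R \<subseteq> PiE J (\<lambda>_. {..<s})"
      unfolding R_def T_def J_def by (auto simp: PiE_def Pi_def)
    have "card R = card ((\<lambda>a. restrict a J) ` R)" using card_image[OF inj] by simp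
    also have "\<dots> \<le> card (PiE J (\<lambda>_. {..<s}))"
      by (rule card_mono[OF _ img]) (simp add: finite_PiE J_def)
    also have "\<dots> = s^(L-2)" using cJ by (simp add: card_PiE J_def)
    finally have "card R \<le> s^(L-2)" .
    moreover have "card (K d) \<le> card R"
      by (rule card_mono[OF _ KR]) (simp add: R_def finT)
    ultimately show ?thesis by simp
  qed
  define B where "B = (\<Union>d\<in>D. K d)"
  have "card B \<le> (\<Sum>d\<in>D. card (K d))" unfolding B_def using fin by (rule card_UN_le)
  also have "\<dots> \<le> card D * s^(L-2)" using sum_bounded_above[of D "\<lambda>d. card (K d)" "s^(L-2)"] Kc by simp
  also have "\<dots> < s^2 * s^(L-2)"
  proof -
    have "s > 0" using cD by (cases s) auto
    then show ?thesis using cD by simp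
  qed
  also have "\<dots> = s^L" using L by (metis le_add_diff_inverse power_add)
  finally have "card B < card T" using cT by simp
  moreover have "finite B" unfolding B_def K_def using fin finT by auto
  ultimately have "\<not> T \<subseteq> B"
    using card_mono[of B T] by linarith
  then obtain a where aT: "a \<in> T" and aB: "a \<notin> B" by blast
  have "\<forall>i<L. \<forall>j<L. i \<noteq> j \<longrightarrow> {i + L * a i, j + L * a j} \<notin> D"
  proof (intro allI impI)
    fix i j assume "i < L" "j < L" "i \<noteq> j"
    then have "a \<in> K {i + L * a i, j + L * a j}" unfolding K_def using aT by blast
    then show "{i + L * a i, j + L * a j} \<notin> D" using aB unfolding B_def by blast
  qed
  then show ?thesis using aT unfolding T_def by blast
qed


lemma eps_lim: "(\<lambda>k. 1 / (4 * (real k + 5)^2)) \<longlonglongrightarrow> (0::real)"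
proof (rule real_tendsto_sandwich[where f="\<lambda>_. 0" and h="\<lambda>k. inverse (real (Suc k))"])
  show "\<forall>\<^sub>F k in sequentially. 0 \<le> 1 / (4 * (real k + 5)^2)" by simp
  show "\<forall>\<^sub>F k in sequentially. 1 / (4 * (real k + 5)^2) \<le> inverse (real (Suc k))"
  proof (rule always_eventually, rule allI)
    fix k
    have "real (Suc k) \<le> 4 * (real k + 5)^2" by (simp add: power2_eq_square algebra_simps)
    then show "1 / (4 * (real k + 5)^2) \<le> inverse (real (Suc k))"
      by (simp add: field_simps)
  qed
  show "(\<lambda>_. 0) \<longlonglongrightarrow> (0::real)" by simp
  show "(\<lambda>k. inverse (real (Suc k))) \<longlonglongrightarrow> 0" by (rule LIMSEQ_inverse_real_of_nat)
qed

lemma ext_subset: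
  assumes "finite A" "B \<subseteq> A" "card B \<le> k" "k \<le> card A"
  shows "\<exists>S. B \<subseteq> S \<and> S \<subseteq> A \<and> card S = k"
proof -
  have "card (A - B) = card A - card B" using assms by (simp add: card_Diff_subset finite_subset)
  then have "k - card B \<le> card (A - B)" using assms by simp
  then obtain C where C: "C \<subseteq> A - B" "card C = k - card B"
    by (meson obtain_subset_with_card_n)
  have fB: "finite B" using assms finite_subset by blast
  have fC: "finite C" using C assms finite_subset by (metis finite_Diff)
  have "B \<inter> C = {}" using C by auto
  then have "card (B \<union> C) = card B + card C" using card_Un_disjoint[OF fB fC] by simp
  then have "card (B \<union> C) = k" using C assms(3) by simp
  then show ?thesis using C assms by (intro exI[of _ "B \<union> C"]) auto
qed

lemma wf_edges_finite: "wf_graph G \<Longrightarrow> finite (edges G)"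
  unfolding wf_graph_def by (meson Pow_iff finite_Pow_iff finite_subset subsetI)

lemma far_lemma:
  assumes L: "L \<ge> 3" and n: "n \<ge> 2 * L" and m: "L \<le> m" "m \<le> n"
    and FH: "\<And>H. wf_graph H \<Longrightarrow> card (verts H) = m \<Longrightarrow> contains_induced H (cyc L) \<Longrightarrow> H \<in> F"
  shows "far_from_free (1 / (4 * real L ^ 2)) F (bl n L)"
  unfolding far_from_free_def
proof (intro allI impI)
  fix E' assume a: "wf_graph (verts (bl n L), E') \<and> induced_free F (verts (bl n L), E')"
  have vb: "verts (bl n L) = {..<n}" by (simp add: bl_def)
  define E where "E = (({..<n}::nat set), E')"
  have wfE: "wf_graph E" and frE: "induced_free F E" using a vb E_def by auto
  define D where "D = edges (bl n L) - E' \<union> (E' - edges (bl n L))"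
  have finD: "finite D" unfolding D_def using wf_edges_finite[OF wfE] wf_edges_finite[OF wf_bl[of n L]]
    by (simp add: E_def)
  define s where "s = n div L"
  have nle: "n \<le> 2 * s * L"
  proof -
    have "n = s * L + n mod L" unfolding s_def by simp
    moreover have "n mod L < L" using L by simp
    ultimately have "n < s * L + L" by linarith
    then have "s \<ge> 1" using n by (cases s) auto
    then have "L \<le> s * L" by simp
    moreover have "2 * s * L = s * L + s * L" by simp
    ultimately show ?thesis using \<open>n < s * L + L\<close> by linarith
  qed
  show "1 / (4 * real L ^ 2) * real (card (verts (bl n L))) ^ 2
          \<le> real (card (edges (bl n L) - E' \<union> (E' - edges (bl n L))))"
  proof (rule ccontr)
    assume "\<not> ?thesis"
    then have c1: "real (card D) < real n ^ 2 / (4 * real L ^ 2)" using vb D_def by simp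
    have "real n ^ 2 \<le> (2 * real s * real L) ^ 2"
      using nle by (metis of_nat_le_iff of_nat_mult of_nat_numeral power_mono of_nat_0_le_iff)
    then have "real n ^ 2 / (4 * real L ^ 2) \<le> real s ^ 2" using L
      by (simp add: field_simps power2_eq_square)
    then have "real (card D) < real s ^ 2" using c1 by linarith
    then have cD: "card D < s ^ 2" by (metis of_nat_less_iff of_nat_power)
    have L2: "2 \<le> L" using L by simp
    obtain a where aP: "a \<in> PiE {..<L} (\<lambda>_. {..<s})"
      and aD: "\<forall>i<L. \<forall>j<L. i \<noteq> j \<longrightarrow> {i + L * a i, j + L * a j} \<notin> D"
      using transversal[OF finD cD L2] by blast
    define t where "t i = i + L * a i" for i
    have tmod: "i < L \<Longrightarrow> t i mod L = i" for i by (simp add: t_def)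
    have tn: "i < L \<Longrightarrow> t i < n" for i
    proof -
      assume i: "i < L"
      then have ai: "a i < s" using aP by auto
      have "t i < L + L * a i" using i t_def by simp
      also have "\<dots> = L * (a i + 1)" by simp
      also have "\<dots> \<le> L * s" using ai by (intro mult_le_mono2) simp
      also have "\<dots> \<le> n" unfolding s_def by (simp add: mult.commute)
      finally show ?thesis .
    qed
    have tinj: "inj_on t {..<L}"
    proof (rule inj_onI)
      fix x y assume xy: "x \<in> {..<L}" "y \<in> {..<L}" "t x = t y"
      then have "t x mod L = t y mod L" by simp
      then show "x = y" using tmod[of x] tmod[of y] xy(1,2) by simp
    qed
    define I where "I = t ` {..<L}"
    have IS: "I \<subseteq> {..<n}" using tn I_def by auto
    have edge_t: "{x,y} \<in> edges (cyc L) \<longleftrightarrow> {t x, t y} \<in> E'" if x: "x < L" and y: "y < L" for x y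
    proof (cases "x = y")
      case True
      have "\<not> {t x, t y} \<in> E'" using wfE True unfolding wf_graph_def E_def by auto
      moreover have "\<not> {x,y} \<in> edges (cyc L)" using True cyc_edge[OF x x] cadj_irr[of L x] x L by simp
      ultimately show ?thesis by simp
    next
      case False
      have ne: "t x \<noteq> t y" using tinj False x y by (auto simp: inj_on_def)
      have nD: "{t x, t y} \<notin> D" using aD x y False t_def by auto
      have "{t x, t y} \<in> E' \<longleftrightarrow> {t x, t y} \<in> edges (bl n L)" using nD D_def by auto
      also have "\<dots> \<longleftrightarrow> badj L (t x) (t y)" using bl_edge tn x y ne by auto
      also have "\<dots> \<longleftrightarrow> cadj L x y" unfolding badj_def using tmod x y False by simp
      also have "\<dots> \<longleftrightarrow> {x,y} \<in> edges (cyc L)" using cyc_edge x y by simp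
      finally show ?thesis by simp
    qed
    have iso: "graph_iso (cyc L) (induced_sub E I)"
      unfolding graph_iso_def
    proof (intro exI conjI)
      show "bij_betw t (verts (cyc L)) (verts (induced_sub E I))"
        using tinj I_def by (simp add: cyc_def bij_betw_def)
      show "\<forall>x\<in>verts (cyc L). \<forall>y\<in>verts (cyc L). {x, y} \<in> edges (cyc L) \<longleftrightarrow> {t x, t y} \<in> edges (induced_sub E I)"
        using edge_t I_def E_def by (auto simp: cyc_def)
    qed
    have cI: "card I = L" using tinj I_def card_image by fastforce
    obtain S where S: "I \<subseteq> S" "S \<subseteq> {..<n}" "card S = m"
      using ext_subset[of "{..<n}" I m] IS cI m by auto
    define H where "H = induced_sub E S"
    have wfH: "wf_graph H" using wfE S unfolding H_def wf_graph_def E_def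
      by (auto intro: finite_subset)
    have cH: "card (verts H) = m" using S H_def by simp
    have "induced_sub H I = induced_sub E I" using S unfolding H_def induced_sub_def by auto
    then have "contains_induced H (cyc L)" using iso S unfolding contains_induced_def H_def by auto
    then have "H \<in> F" using FH wfH cH by blast
    moreover have "contains_induced E H" unfolding contains_induced_def
    proof (intro exI conjI)
      show "S \<subseteq> verts E" using S(2) E_def by simp
      show "graph_iso H (induced_sub E S)" unfolding H_def by (rule iso_refl)
    qed
    ultimately show False using frE unfolding induced_free_def by auto
  qed
qed

theorem theorem5p1:
  fixes g :: "real \<Rightarrow> nat"
  shows "\<exists>\<F> :: graph set. \<exists>\<epsilon> :: nat \<Rightarrow> real.
    (\<forall>H\<in>\<F>. wf_graph H) \<and> C4 \<in> \<F> \<and>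
    (\<forall>k\<ge>1. 0 < \<epsilon> k \<and> \<epsilon> k < 1/2) \<and> \<epsilon> \<longlonglongrightarrow> 0 \<and>
    (\<forall>k\<ge>1. \<exists>n0. \<forall>n\<ge>n0. \<exists>G. wf_graph G \<and> card (verts G) = n \<and>
        far_from_free (\<epsilon> k) \<F> G \<and>
        (\<forall>S\<subseteq>verts G. card S = g (\<epsilon> k) \<longrightarrow> induced_free \<F> (induced_sub G S)))"
proof -
  define eps :: "nat \<Rightarrow> real" where "eps k = 1 / (4 * (real k + 5)^2)" for k
  define mk where "mk k = max (Suc (g (eps k))) (k + 5)" for k
  define F where "F = insert C4 {H. wf_graph H \<and> (\<exists>j. card (verts H) = mk j \<and> contains_induced H (cyc (j+5)))}"
  have wfF: "\<forall>H\<in>F. wf_graph H" unfolding F_def using wf_cyc[of 4] C4_cyc by auto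
  have C4F: "C4 \<in> F" unfolding F_def by simp
  have epos: "\<forall>k\<ge>1. 0 < eps k \<and> eps k < 1/2"
  proof (intro allI impI)
    fix k :: nat
    have "(5::real) ^ 2 \<le> (real k + 5) ^ 2" by (rule power_mono) auto
    then have x: "(2::real) < 4 * (real k + 5)^2" by simp
    have "0 < eps k" unfolding eps_def using x by simp
    moreover have "eps k < 1/2" unfolding eps_def
      by (rule divide_strict_left_mono[OF x]) auto
    ultimately show "0 < eps k \<and> eps k < 1/2" by simp
  qed
  have lim: "eps \<longlonglongrightarrow> 0" unfolding eps_def by (rule eps_lim)
  have main: "\<exists>n0. \<forall>n\<ge>n0. \<exists>G. wf_graph G \<and> card (verts G) = n \<and>
        far_from_free (eps k) F G \<and>
        (\<forall>S\<subseteq>verts G. card S = g (eps k) \<longrightarrow> induced_free F (induced_sub G S))" for k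
  proof (intro exI allI impI)
    fix n assume n: "n \<ge> mk k + 2 * (k + 5)"
    define L where "L = k + 5"
    have epsL: "eps k = 1 / (4 * real L ^ 2)" unfolding eps_def L_def by simp
    have far: "far_from_free (eps k) F (bl n L)" unfolding epsL
    proof (rule far_lemma)
      show "3 \<le> L" "2 * L \<le> n" "L \<le> mk k" "mk k \<le> n" using n unfolding L_def mk_def by auto
      show "H \<in> F" if "wf_graph H" "card (verts H) = mk k" "contains_induced H (cyc L)" for H
        using that unfolding F_def L_def by blast
    qed
    have loc: "induced_free F (induced_sub (bl n L) S)" if S: "S \<subseteq> verts (bl n L)" "card S = g (eps k)" for S
      unfolding induced_free_def
    proof (intro ballI notI)
      fix H assume HF: "H \<in> F" and ci: "contains_induced (induced_sub (bl n L) S) H"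
      have ciG: "contains_induced (bl n L) H" using ci_sub[OF S(1) ci] .
      show False
      proof (cases "H = C4")
        case True
        then have "4 = L" using cyc_in_bl ciG C4_cyc L_def by auto
        then show False using L_def by simp
      next
        case False
        then obtain j where j: "card (verts H) = mk j" "contains_induced H (cyc (j+5))"
          using HF unfolding F_def by auto
        have "j + 5 = L" using cyc_in_bl[OF ci_trans[OF ciG j(2)]] L_def by simp
        then have "j = k" using L_def by simp
        have "card (verts H) \<le> card (verts (induced_sub (bl n L) S))"
          by (rule ci_card[OF ci]) (use S in \<open>auto simp: bl_def intro: finite_subset\<close>)
        then have "mk k \<le> g (eps k)" using j \<open>j = k\<close> S by simp
        then show False unfolding mk_def by simp
      qed
    qed
    show "wf_graph (bl n L) \<and> card (verts (bl n L)) = n \<and> far_from_free (eps k) F (bl n L) \<and>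
        (\<forall>S\<subseteq>verts (bl n L). card S = g (eps k) \<longrightarrow> induced_free F (induced_sub (bl n L) S))"
      using wf_bl far loc by (auto simp: bl_def)
  qed
  show ?thesis
  proof (intro exI conjI)
    show "\<forall>H\<in>F. wf_graph H" by (rule wfF)
    show "C4 \<in> F" by (rule C4F)
    show "\<forall>k\<ge>1. 0 < eps k \<and> eps k < 1/2" by (rule epos)
    show "eps \<longlonglongrightarrow> 0" by (rule lim)
    show "\<forall>k\<ge>1. \<exists>n0. \<forall>n\<ge>n0. \<exists>G. wf_graph G \<and> card (verts G) = n \<and>
        far_from_free (eps k) F G \<and>
        (\<forall>S\<subseteq>verts G. card S = g (eps k) \<longrightarrow> induced_free F (induced_sub G S))"
      using main by blast
  qed
qed

end
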